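(* Let $F$ be any field, $N\in\mathbb{N}$, and $p,p'\in\mathbb{N}$ with $p+p'\le N+1$. If $x\in F^{N+1}$ satisfies $\operatorname{rank}(H_{p,p'-1}(x))\le p$, then $\operatorname{rank}(H_{p,p'-1}(x))\le \operatorname{rank}(H_{p-1,p'}(x))$.
   Context: $\mathbb{N}=\{0,1,2,\ldots\}$. For $N\in\mathbb{N}$, $x=(x_0,\ldots,x_N)\in F^{N+1}$ and integers $s,t\ge -1$ with $s+t\le N$, the Hankel matrix $H_{s,t}(x)$ is the $(s+1)\times(t+1)$ matrix $(x_{i+j})_{0\le i\le s,\,0\le j\le t}$ (a matrix with zero rows or columns has rank $0$). *)

theory Defs
  imports "Jordan_Normal_Form.DL_Rank"
begin

text \<open>Hankel matrix H_{s,t}(x) for s,t \<ge> -1 with s+t \<le> N, encoded by its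
  row count r = s+1 and column count c = t+1 (so r,c are naturals):
  the r x c matrix with (i,j)-entry x_{i+j}.\<close>
definition hankel :: "'a list \<Rightarrow> nat \<Rightarrow> nat \<Rightarrow> 'a mat" where
  "hankel x r c = mat r c (\<lambda>(i, j). x ! (i + j))"

definition mrank :: "'a::field mat \<Rightarrow> nat" where
  "mrank A = vec_space.rank (dim_row A) A"

end

theory Submission imports Defs begin

lemma mult_unit_col:
  fixes G :: "'a::semiring_1 mat"
  assumes "G \<in> carrier_mat n k" "i < k"
  shows "G *\<^sub>v unit_vec k i = col G i"
  using assms by (intro eq_vecI) (auto simp: scalar_prod_def if_distrib sum.delta cong: if_cong)

lemma (in vec_space) inj_rank:
  assumes G: "G \<in> carrier_mat n k"
  and inj: "\<And>v. v \<in> carrier_vec k \<Longrightarrow> G *\<^sub>v v = 0\<^sub>v n \<Longrightarrow> v = 0\<^sub>v k"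
  shows "k \<le> rank G"
proof -
  have dist: "distinct (cols G)"
  proof (rule ccontr)
    assume "\<not> distinct (cols G)"
    then obtain i j where ij: "i < k" "j < k" "i \<noteq> j" "cols G ! i = cols G ! j"
      using G by (auto simp: distinct_conv_nth)
    define v :: "'a vec" where "v = unit_vec k i - unit_vec k j"
    have vc: "v \<in> carrier_vec k" unfolding v_def by simp
    have "G *\<^sub>v v = G *\<^sub>v unit_vec k i - G *\<^sub>v unit_vec k j"
      unfolding v_def using G by (simp add: mult_minus_distrib_mat_vec)
    also have "\<dots> = 0\<^sub>v n" using ij G by (simp add: mult_unit_col)
    finally have "v = 0\<^sub>v k" using inj vc by blast
    then have "v $ i = 0" using ij by simp
    moreover have "v $ i = 1" unfolding v_def using ij by simp
    ultimately show False by simp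
  qed
  have li: "lin_indpt (set (cols G))"
  proof
    assume "lin_dep (set (cols G))"
    then obtain v where "v \<in> carrier_vec k" "v \<noteq> 0\<^sub>v k" "G *\<^sub>v v = 0\<^sub>v n"
      using lin_depE[OF G _ dist] by blast
    then show False using inj by blast
  qed
  have "card (set (cols G)) = k" using dist G by (simp add: distinct_card)
  then show ?thesis using rank_ge_card_indpt[OF G _ li] by simp
qed

lemma (in vec_space) rank_mono:
  assumes G: "G \<in> carrier_mat n k" and B: "B \<in> carrier_mat n nb"
  and sub: "\<And>v. v \<in> carrier_vec k \<Longrightarrow> \<exists>w\<in>carrier_vec nb. G *\<^sub>v v = B *\<^sub>v w"
  shows "rank G \<le> rank B"
proof -
  have cB: "set (cols B) \<subseteq> carrier_vec n" using B cols_dim by blast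
  have cG: "set (cols G) \<subseteq> carrier_vec n" using G cols_dim by blast
  have Gsub: "set (cols G) \<subseteq> span (set (cols B))"
  proof
    fix c assume "c \<in> set (cols G)"
    then obtain i where i: "i < k" "c = col G i" using G by (auto simp: in_set_conv_nth)
    then have "c = G *\<^sub>v unit_vec k i" using G by (simp add: mult_unit_col)
    then obtain w where w: "w \<in> carrier_vec nb" "c = B *\<^sub>v w" using sub[of "unit_vec k i"] by auto
    then show "c \<in> span (set (cols B))"
      using col_space_eq[OF B] B unfolding col_space_def by auto
  qed
  define C where "C = mat_of_cols n (cols B @ cols G)"
  have cols_C: "cols C = cols B @ cols G" unfolding C_def using cB cG by simp
  have C: "C \<in> carrier_mat n (length (cols B @ cols G))" unfolding C_def by (rule mat_of_cols_carrier(1))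
  have "span (set (cols C)) \<subseteq> span (set (cols B))"
    apply (rule span_subsetI[OF cB])
    using Gsub in_own_span[OF cB] cols_C by auto
  moreover have "span (set (cols B)) \<subseteq> span (set (cols C))"
    by (rule span_is_monotone) (simp add: cols_C)
  ultimately have eq: "span (set (cols C)) = span (set (cols B))" by blast
  have rC: "rank C = rank B" unfolding rank_def eq ..
  obtain S where S: "maximal S (\<lambda>T. T \<subseteq> set (cols G) \<and> lin_indpt T)"
    using maximal_exists[of "(\<lambda>T. T \<subseteq> set (cols G) \<and> lin_indpt T)" "card (set (cols G))" "{}"]
    by (meson List.finite_set card_mono empty_iff empty_subsetI finite_lin_indpt2 rev_finite_subset)
  have "rank G = card S" using rank_card_indpt[OF G S] .
  also have "\<dots> \<le> rank C"
    apply (rule rank_ge_card_indpt[OF C])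
    using S unfolding maximal_def cols_C by auto
  finally show ?thesis using rC by simp
qed

lemma (in vec_space) rank_witness:
  assumes B: "B \<in> carrier_mat n nb"
  shows "\<exists>M. M \<in> carrier_mat n (rank B) \<and>
     (\<forall>v\<in>carrier_vec (rank B). M *\<^sub>v v = 0\<^sub>v n \<longrightarrow> v = 0\<^sub>v (rank B)) \<and>
     (\<forall>w\<in>carrier_vec nb. \<exists>z\<in>carrier_vec (rank B). B *\<^sub>v w = M *\<^sub>v z) \<and>
     (\<forall>z\<in>carrier_vec (rank B). \<exists>w\<in>carrier_vec nb. M *\<^sub>v z = B *\<^sub>v w)"
proof -
  have cB: "set (cols B) \<subseteq> carrier_vec n" using B cols_dim by blast
  obtain S where S: "maximal S (\<lambda>T. T \<subseteq> set (cols B) \<and> lin_indpt T)"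
    using maximal_exists[of "(\<lambda>T. T \<subseteq> set (cols B) \<and> lin_indpt T)" "card (set (cols B))" "{}"]
    by (meson List.finite_set card_mono empty_iff empty_subsetI finite_lin_indpt2 rev_finite_subset)
  have rk: "rank B = card S" using rank_card_indpt[OF B S] .
  have SB: "S \<subseteq> set (cols B)" and liS: "lin_indpt S" using S unfolding maximal_def by auto
  have finS: "finite S" using SB finite_subset by blast
  obtain ss where ss: "distinct ss" "set ss = S" using finite_distinct_list[OF finS] by blast
  have len: "length ss = rank B" using ss rk by (metis distinct_card)
  have css: "set ss \<subseteq> carrier_vec n" using ss SB cB by auto
  define M where "M = mat_of_cols n ss"
  have M: "M \<in> carrier_mat n (rank B)" unfolding M_def using len by (metis mat_of_cols_carrier(1))
  have colsM: "cols M = ss" unfolding M_def using css by simp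
  have spanS: "span S = span (set (cols B))"
  proof (rule ccontr)
    assume ne: "span S \<noteq> span (set (cols B))"
    have "span S \<subseteq> span (set (cols B))" using span_is_monotone SB by metis
    then have "\<not> set (cols B) \<subseteq> span S" by (meson SB ne cB span_is_submodule
      span_is_subset subset_antisym subset_trans)
    then obtain s where "s\<in>set (cols B)" "s \<notin> span S" by blast
    then have "lin_indpt (S\<union>{s})" using lindep_span
      by (meson SB liS cB lin_dep_iff_in_span rev_subsetD span_mem subset_trans)
    have "s\<notin>S" using SB \<open>s \<notin> span S\<close> cB span_mem by auto
    then have "(S\<union>{s}) \<subseteq> set (cols B) \<and> lin_indpt (S\<union>{s})" using SB \<open>lin_indpt (S \<union> {s})\<close> \<open>s \<in> set (cols B)\<close> by auto
    then have "\<not>maximal S (\<lambda>T. T \<subseteq> set (cols B) \<and> lin_indpt T)"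
      unfolding maximal_def using Un_subset_iff \<open>s \<notin> S\<close> insert_subset  order_refl by auto
    then show False using S by metis
  qed
  have csM: "col_space M = col_space B" unfolding col_space_def colsM ss(2) spanS ..
  have inj: "\<forall>v\<in>carrier_vec (rank B). M *\<^sub>v v = 0\<^sub>v n \<longrightarrow> v = 0\<^sub>v (rank B)"
  proof (intro ballI impI, rule ccontr)
    fix v :: "'a vec" assume v: "v \<in> carrier_vec (rank B)" "M *\<^sub>v v = 0\<^sub>v n" "v \<noteq> 0\<^sub>v (rank B)"
    have "lin_dep (set (cols M))" using lin_depI[OF M v(1) v(3) v(2)] colsM ss by simp
    then show False using liS colsM ss by simp
  qed
  have e1: "\<forall>w\<in>carrier_vec nb. \<exists>z\<in>carrier_vec (rank B). B *\<^sub>v w = M *\<^sub>v z"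
  proof
    fix w :: "'a vec" assume w: "w \<in> carrier_vec nb"
    have "B *\<^sub>v w \<in> col_space B" using col_space_eq[OF B] B w by auto
    then show "\<exists>z\<in>carrier_vec (rank B). B *\<^sub>v w = M *\<^sub>v z"
      unfolding csM[symmetric] col_space_eq[OF M] using M by (auto intro: sym)
  qed
  have e2: "\<forall>z\<in>carrier_vec (rank B). \<exists>w\<in>carrier_vec nb. M *\<^sub>v z = B *\<^sub>v w"
  proof
    fix z :: "'a vec" assume z: "z \<in> carrier_vec (rank B)"
    have "M *\<^sub>v z \<in> col_space M" using col_space_eq[OF M] M z by auto
    then show "\<exists>w\<in>carrier_vec nb. M *\<^sub>v z = B *\<^sub>v w"
      unfolding csM col_space_eq[OF B] using B by (auto intro: sym)
  qed
  show ?thesis using M inj e1 e2 by blast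
qed

lemma lower_rank:
  fixes G B :: "'a::field mat"
  assumes G: "G \<in> carrier_mat n k" and B: "B \<in> carrier_mat n nb"
  and inj: "\<And>v. v \<in> carrier_vec k \<Longrightarrow> G *\<^sub>v v = 0\<^sub>v n \<Longrightarrow> v = 0\<^sub>v k"
  and sub: "\<And>v. v \<in> carrier_vec k \<Longrightarrow> \<exists>w\<in>carrier_vec nb. G *\<^sub>v v = B *\<^sub>v w"
  shows "k \<le> vec_space.rank n B"
  using vec_space.inj_rank[OF G inj] vec_space.rank_mono[OF G B sub] by linarith

lemma core:
  fixes H H' :: "'a::field mat"
  assumes H: "H \<in> carrier_mat (Suc p) q" and H': "H' \<in> carrier_mat p q'"
  and pi: "\<And>w. w \<in> carrier_vec q \<Longrightarrow> \<exists>w'\<in>carrier_vec q'. vec p (\<lambda>i. (H *\<^sub>v w) $ i) = H' *\<^sub>v w'"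
  and sig: "\<And>w. w \<in> carrier_vec q \<Longrightarrow> \<exists>w'\<in>carrier_vec q'. vec p (\<lambda>i. (H *\<^sub>v w) $ Suc i) = H' *\<^sub>v w'"
  and le: "vec_space.rank (Suc p) H \<le> p"
  shows "vec_space.rank (Suc p) H \<le> vec_space.rank p H'"
proof -
  define r where "r = vec_space.rank (Suc p) H"
  obtain M where M: "M \<in> carrier_mat (Suc p) r"
    and injM: "\<And>v. v \<in> carrier_vec r \<Longrightarrow> M *\<^sub>v v = 0\<^sub>v (Suc p) \<Longrightarrow> v = 0\<^sub>v r"
    and toM: "\<And>w. w \<in> carrier_vec q \<Longrightarrow> \<exists>z\<in>carrier_vec r. H *\<^sub>v w = M *\<^sub>v z"
    and fromM: "\<And>z. z \<in> carrier_vec r \<Longrightarrow> \<exists>w\<in>carrier_vec q. M *\<^sub>v z = H *\<^sub>v w"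
    using vec_space.rank_witness[OF H] unfolding r_def by blast
  define inV where "inV u \<longleftrightarrow> (\<exists>z\<in>carrier_vec r. u = M *\<^sub>v z)" for u
  have piM: "\<exists>w'\<in>carrier_vec q'. vec p (\<lambda>i. (M *\<^sub>v z) $ i) = H' *\<^sub>v w'" if "z \<in> carrier_vec r" for z
    using fromM[OF that] pi by metis
  have sigM: "\<exists>w'\<in>carrier_vec q'. vec p (\<lambda>i. (M *\<^sub>v z) $ Suc i) = H' *\<^sub>v w'" if "z \<in> carrier_vec r" for z
    using fromM[OF that] sig by metis
  have ex: "\<exists>k\<le>p. \<not> inV (unit_vec (Suc p) k)"
  proof (rule ccontr)
    assume "\<not> ?thesis"
    then have all: "\<And>k. k \<le> p \<Longrightarrow> inV (unit_vec (Suc p) k)" by blast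
    have "\<forall>i. \<exists>z. i < Suc p \<longrightarrow> z \<in> carrier_vec r \<and> unit_vec (Suc p) i = M *\<^sub>v z"
      using all unfolding inV_def by (metis less_Suc_eq_le)
    then obtain zf where zf: "\<And>i. i < Suc p \<Longrightarrow> zf i \<in> carrier_vec r \<and> unit_vec (Suc p) i = M *\<^sub>v zf i"
      by metis
    define Z where "Z = mat r (Suc p) (\<lambda>(a,i). zf i $ a)"
    have Z: "Z \<in> carrier_mat r (Suc p)" unfolding Z_def by simp
    have colZ: "col Z i = zf i" if "i < Suc p" for i
      using zf[OF that] that unfolding Z_def by (intro eq_vecI) auto
    have MZ: "M * Z = 1\<^sub>m (Suc p)"
    proof (rule eq_matI)
      fix a i assume a: "a < dim_row (1\<^sub>m (Suc p))" and i: "i < dim_col (1\<^sub>m (Suc p))"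
      have "(M * Z) $$ (a, i) = row M a \<bullet> col Z i" using M Z a i by simp
      also have "\<dots> = (M *\<^sub>v zf i) $ a" using M a i colZ by simp
      also have "\<dots> = unit_vec (Suc p) i $ a" using zf i by simp
      also have "\<dots> = 1\<^sub>m (Suc p) $$ (a, i)" using a i by simp
      finally show "(M * Z) $$ (a, i) = 1\<^sub>m (Suc p) $$ (a, i)" .
    qed (use M Z in auto)
    have "Suc p \<le> vec_space.rank (Suc p) H"
    proof (rule lower_rank[OF one_carrier_mat H])
      fix v :: "'a vec" assume v: "v \<in> carrier_vec (Suc p)" "1\<^sub>m (Suc p) *\<^sub>v v = 0\<^sub>v (Suc p)"
      then show "v = 0\<^sub>v (Suc p)" by simp
    next
      fix v :: "'a vec" assume v: "v \<in> carrier_vec (Suc p)"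
      have "1\<^sub>m (Suc p) *\<^sub>v v = M *\<^sub>v (Z *\<^sub>v v)"
        using M Z v MZ by (metis assoc_mult_mat_vec)
      then show "\<exists>w\<in>carrier_vec q. 1\<^sub>m (Suc p) *\<^sub>v v = H *\<^sub>v w"
        using fromM[of "Z *\<^sub>v v"] Z v by auto
    qed
    then show False using le by simp
  qed
  define k where "k = (GREATEST k. k \<le> p \<and> \<not> inV (unit_vec (Suc p) k))"
  have k: "k \<le> p" "\<not> inV (unit_vec (Suc p) k)"
    using GreatestI_ex_nat[of "\<lambda>k. k \<le> p \<and> \<not> inV (unit_vec (Suc p) k)" p] ex unfolding k_def by auto
  have above: "inV (unit_vec (Suc p) j)" if "k < j" "j \<le> p" for j
    using Greatest_le_nat[of "\<lambda>k. k \<le> p \<and> \<not> inV (unit_vec (Suc p) k)" j p] that unfolding k_def by force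
  show ?thesis
  proof (cases "k = p")
    case True
    define G where "G = mat p r (\<lambda>(i,c). M $$ (i,c))"
    have G: "G \<in> carrier_mat p r" unfolding G_def by simp
    have Gv: "G *\<^sub>v v = vec p (\<lambda>i. (M *\<^sub>v v) $ i)" if "v \<in> carrier_vec r" for v
      using that M unfolding G_def by (intro eq_vecI) (auto simp: scalar_prod_def)
    have "r \<le> vec_space.rank p H'"
    proof (rule lower_rank[OF G H'])
      fix v :: "'a vec" assume v: "v \<in> carrier_vec r" "G *\<^sub>v v = 0\<^sub>v p"
      define u where "u = M *\<^sub>v v"
      have u: "u \<in> carrier_vec (Suc p)" unfolding u_def using M v(1) by (rule mult_mat_vec_carrier)
      have ui: "u $ i = 0" if "i < p" for i
        using v that arg_cong[OF Gv[OF v(1)], of "\<lambda>x. x $ i"] unfolding u_def by simp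
      have "u $ p = 0"
      proof (rule ccontr)
        assume ne: "u $ p \<noteq> 0"
        have "unit_vec (Suc p) p = (1 / u $ p) \<cdot>\<^sub>v u"
          using ui ne u by (intro eq_vecI) (auto simp: less_Suc_eq)
        also have "\<dots> = M *\<^sub>v ((1 / u $ p) \<cdot>\<^sub>v v)" unfolding u_def using M v by (simp add: mult_mat_vec)
        finally have "inV (unit_vec (Suc p) p)" unfolding inV_def using v by auto
        then show False using k True by simp
      qed
      then have "u = 0\<^sub>v (Suc p)" using ui u by (intro eq_vecI) (auto simp: less_Suc_eq)
      then show "v = 0\<^sub>v r" using injM v unfolding u_def by blast
    next
      fix v :: "'a vec" assume v: "v \<in> carrier_vec r"
      show "\<exists>w\<in>carrier_vec q'. G *\<^sub>v v = H' *\<^sub>v w" using Gv[OF v] piM[OF v] by simp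
    qed
    then show ?thesis unfolding r_def .
  next
    case False
    then have kp: "k < p" using k by simp
    obtain z0 where z0: "z0 \<in> carrier_vec r" "unit_vec (Suc p) p = M *\<^sub>v z0"
      using above[OF kp le_refl] unfolding inV_def by blast
    have "z0 \<noteq> 0\<^sub>v r"
    proof
      assume "z0 = 0\<^sub>v r"
      moreover have "row M p \<in> carrier_vec r" using M row_carrier[of M p] by simp
      ultimately show False using arg_cong[OF z0(2), of "\<lambda>x. x $ p"] M by simp
    qed
    then obtain j where j: "j < r" "z0 $ j \<noteq> 0" using z0(1) by (metis eq_vecI carrier_vecD index_zero_vec)
    obtain b0 where b0: "b0 \<in> carrier_vec r" "unit_vec (Suc p) (Suc k) = M *\<^sub>v b0"
      using above[of "Suc k"] kp unfolding inV_def by auto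
    obtain w1 where w1: "w1 \<in> carrier_vec q'" "vec p (\<lambda>i. (M *\<^sub>v b0) $ Suc i) = H' *\<^sub>v w1"
      using sigM[OF b0(1)] by blast
    have ek: "unit_vec p k = H' *\<^sub>v w1" using w1(2) b0(2)[symmetric] kp
      by (metis (no_types, lifting) eq_vecI index_unit_vec(1,3) index_vec dim_vec Suc_less_eq nat.inject)
    define G where "G = mat p r (\<lambda>(i,c). if c = j then (if i = k then 1 else 0) else M $$ (i,c))"
    have G: "G \<in> carrier_mat p r" unfolding G_def by simp
    define cut where "cut v = vec r (\<lambda>c. if c = j then 0 else v $ c)" for v :: "'a vec"
    have cutc: "cut v \<in> carrier_vec r" for v unfolding cut_def by simp
    have Gv: "G *\<^sub>v v = vec p (\<lambda>i. (M *\<^sub>v cut v) $ i) + (v $ j) \<cdot>\<^sub>v unit_vec p k"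
      if v: "v \<in> carrier_vec r" for v
    proof (rule eq_vecI)
      fix i assume "i < dim_vec (vec p (\<lambda>i. (M *\<^sub>v cut v) $ i) + (v $ j) \<cdot>\<^sub>v unit_vec p k)"
      then have i: "i < p" by simp
      have "(G *\<^sub>v v) $ i = (\<Sum>c<r. G $$ (i,c) * v $ c)"
        using G v i by (simp add: scalar_prod_def lessThan_atLeast0)
      also have "\<dots> = (\<Sum>c<r. M $$ (i,c) * cut v $ c + (if c = j then (if i = k then v $ j else 0) else 0))"
        using i unfolding G_def cut_def by (intro sum.cong) auto
      also have "\<dots> = (\<Sum>c<r. M $$ (i,c) * cut v $ c) + (if i = k then v $ j else 0)"
        using j by (simp add: sum.distrib)
      also have "\<dots> = (vec p (\<lambda>i. (M *\<^sub>v cut v) $ i) + (v $ j) \<cdot>\<^sub>v unit_vec p k) $ i"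
        using i M kp cutc[of v] by (simp add: scalar_prod_def lessThan_atLeast0)
      finally show "(G *\<^sub>v v) $ i = (vec p (\<lambda>i. (M *\<^sub>v cut v) $ i) + (v $ j) \<cdot>\<^sub>v unit_vec p k) $ i" .
    qed (use G v in simp)
    have "r \<le> vec_space.rank p H'"
    proof (rule lower_rank[OF G H'])
      fix v :: "'a vec" assume v: "v \<in> carrier_vec r" "G *\<^sub>v v = 0\<^sub>v p"
      define u where "u = M *\<^sub>v cut v"
      have u: "u \<in> carrier_vec (Suc p)" unfolding u_def using M cutc by (rule mult_mat_vec_carrier)
      have ui: "u $ i + (if i = k then v $ j else 0) = 0" if "i < p" for i
        using v that arg_cong[OF Gv[OF v(1)], of "\<lambda>x. x $ i"] unfolding u_def by (auto simp: unit_vec_def)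
      have vj: "v $ j = 0"
      proof (rule ccontr)
        assume t: "v $ j \<noteq> 0"
        have "unit_vec (Suc p) k = (- 1 / v $ j) \<cdot>\<^sub>v (u - (u $ p) \<cdot>\<^sub>v unit_vec (Suc p) p)"
        proof (rule eq_vecI)
          fix i assume "i < dim_vec ((- 1 / v $ j) \<cdot>\<^sub>v (u - (u $ p) \<cdot>\<^sub>v unit_vec (Suc p) p))"
          then have "i < Suc p" using u by simp
          then consider "i < p" | "i = p" by linarith
          then show "unit_vec (Suc p) k $ i = ((- 1 / v $ j) \<cdot>\<^sub>v (u - (u $ p) \<cdot>\<^sub>v unit_vec (Suc p) p)) $ i"
          proof cases
            case 1
            show ?thesis
            proof (cases "i = k")
              case True
              have "v $ j = - u $ k" using ui[OF kp] by (simp add: eq_neg_iff_add_eq_0 add.commute)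
              then show ?thesis using True 1 u t kp by (auto simp: field_simps)
            next
              case False
              then show ?thesis using ui[OF 1] 1 u t kp by auto
            qed
          next
            case 2
            then show ?thesis using u kp by auto
          qed
        qed (use u in simp)
        also have "\<dots> = M *\<^sub>v ((- 1 / v $ j) \<cdot>\<^sub>v (cut v - (u $ p) \<cdot>\<^sub>v z0))"
          unfolding u_def z0(2) using M z0(1) cutc[of v]
          by (simp add: mult_mat_vec mult_minus_distrib_mat_vec)
        finally have "inV (unit_vec (Suc p) k)" unfolding inV_def using z0(1) cutc[of v] by auto
        then show False using k by simp
      qed
      have ui0: "u $ i = 0" if "i < p" for i using ui[OF that] vj by (simp split: if_splits)
      define c where "c = u $ p"
      have uc: "u = c \<cdot>\<^sub>v unit_vec (Suc p) p"
        using ui0 u unfolding c_def by (intro eq_vecI) (auto simp: less_Suc_eq)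
      have "M *\<^sub>v (cut v - c \<cdot>\<^sub>v z0) = M *\<^sub>v cut v - c \<cdot>\<^sub>v (M *\<^sub>v z0)"
        using M z0(1) cutc[of v] by (simp add: mult_minus_distrib_mat_vec mult_mat_vec)
      also have "\<dots> = u - u" unfolding u_def[symmetric] z0(2)[symmetric] uc[symmetric] ..
      also have "\<dots> = 0\<^sub>v (Suc p)" using u by simp
      finally have "M *\<^sub>v (cut v - (u $ p) \<cdot>\<^sub>v z0) = 0\<^sub>v (Suc p)" unfolding c_def .
      then have "cut v - (u $ p) \<cdot>\<^sub>v z0 = 0\<^sub>v r" using injM z0(1) cutc[of v] by simp
      then have cz0: "cut v - (u $ p) \<cdot>\<^sub>v z0 = 0\<^sub>v r" .
      have cz: "cut v = (u $ p) \<cdot>\<^sub>v z0"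
      proof (rule eq_vecI)
        fix i assume "i < dim_vec ((u $ p) \<cdot>\<^sub>v z0)"
        then have i: "i < r" using z0(1) by simp
        have "(cut v - (u $ p) \<cdot>\<^sub>v z0) $ i = 0" using cz0 i by simp
        then show "cut v $ i = ((u $ p) \<cdot>\<^sub>v z0) $ i" using i z0(1) cutc[of v] by simp
      qed (use z0(1) cutc[of v] in simp)
      have "cut v $ j = 0" unfolding cut_def using j by simp
      then have "(u $ p) * z0 $ j = 0" using arg_cong[OF cz, of "\<lambda>x. x $ j"] j z0(1) by simp
      then have "u $ p = 0" using j by simp
      then have c0: "cut v = 0\<^sub>v r" using cz z0(1) by (auto intro!: eq_vecI)
      show "v = 0\<^sub>v r"
      proof (rule eq_vecI)
        fix i assume "i < dim_vec (0\<^sub>v r)"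
        then have i: "i < r" by simp
        show "v $ i = 0\<^sub>v r $ i"
        proof (cases "i = j")
          case True then show ?thesis using vj i by simp
        next
          case False
          have "cut v $ i = v $ i" unfolding cut_def using i False by simp
          then show ?thesis using c0 i by simp
        qed
      qed (use v(1) in simp)
    next
      fix v :: "'a vec" assume v: "v \<in> carrier_vec r"
      obtain w where w: "w \<in> carrier_vec q'" "vec p (\<lambda>i. (M *\<^sub>v cut v) $ i) = H' *\<^sub>v w"
        using piM[OF cutc[of v]] by blast
      have "G *\<^sub>v v = H' *\<^sub>v w + (v $ j) \<cdot>\<^sub>v (H' *\<^sub>v w1)"
        unfolding Gv[OF v] w(2) ek ..
      also have "\<dots> = H' *\<^sub>v w + H' *\<^sub>v ((v $ j) \<cdot>\<^sub>v w1)"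
        unfolding mult_mat_vec[OF H' w1(1)] ..
      also have "\<dots> = H' *\<^sub>v (w + (v $ j) \<cdot>\<^sub>v w1)"
        by (rule mult_add_distrib_mat_vec[symmetric, OF H' w(1)]) (use w1(1) in simp)
      finally have "G *\<^sub>v v = H' *\<^sub>v (w + (v $ j) \<cdot>\<^sub>v w1)" .
      then show "\<exists>w\<in>carrier_vec q'. G *\<^sub>v v = H' *\<^sub>v w"
      proof (rule bexI)
        show "w + (v $ j) \<cdot>\<^sub>v w1 \<in> carrier_vec q'"
          using w(1) w1(1) by (metis add_carrier_vec smult_carrier_vec)
      qed
    qed
    then show ?thesis unfolding r_def .
  qed
qed

theorem lemma6:
  fixes x :: "'a::field list" and N p p' :: nat
  assumes "length x = N + 1"
    and "p + p' \<le> N + 1"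
    and "mrank (hankel x (p + 1) p') \<le> p"
  shows "mrank (hankel x (p + 1) p') \<le> mrank (hankel x p (p' + 1))"
proof -
  define H where "H = hankel x (Suc p) p'"
  define H' where "H' = hankel x p (Suc p')"
  have Hc: "H \<in> carrier_mat (Suc p) p'" unfolding H_def hankel_def by simp
  have H'c: "H' \<in> carrier_mat p (Suc p')" unfolding H'_def hankel_def by simp
  have pi: "\<exists>w'\<in>carrier_vec (Suc p'). vec p (\<lambda>i. (H *\<^sub>v w) $ i) = H' *\<^sub>v w'"
    if w: "w \<in> carrier_vec p'" for w
  proof
    let ?w' = "vec (Suc p') (\<lambda>j. if j < p' then w $ j else 0)"
    show "?w' \<in> carrier_vec (Suc p')" by simp
    show "vec p (\<lambda>i. (H *\<^sub>v w) $ i) = H' *\<^sub>v ?w'"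
    proof (rule eq_vecI)
      fix i assume "i < dim_vec (H' *\<^sub>v ?w')"
      then have i: "i < p" using H'c by simp
      have "(H' *\<^sub>v ?w') $ i = (\<Sum>j<Suc p'. x ! (i + j) * ?w' $ j)"
        using i w unfolding H'_def hankel_def by (simp add: scalar_prod_def lessThan_atLeast0)
      also have "\<dots> = (\<Sum>j<p'. x ! (i + j) * w $ j)" by simp
      also have "\<dots> = (H *\<^sub>v w) $ i"
        using i w unfolding H_def hankel_def by (simp add: scalar_prod_def lessThan_atLeast0)
      finally show "vec p (\<lambda>i. (H *\<^sub>v w) $ i) $ i = (H' *\<^sub>v ?w') $ i" using i by simp
    qed (use H'c in simp)
  qed
  have sig: "\<exists>w'\<in>carrier_vec (Suc p'). vec p (\<lambda>i. (H *\<^sub>v w) $ Suc i) = H' *\<^sub>v w'"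
    if w: "w \<in> carrier_vec p'" for w
  proof
    let ?w' = "vec (Suc p') (\<lambda>j. if j = 0 then 0 else w $ (j - 1))"
    show "?w' \<in> carrier_vec (Suc p')" by simp
    show "vec p (\<lambda>i. (H *\<^sub>v w) $ Suc i) = H' *\<^sub>v ?w'"
    proof (rule eq_vecI)
      fix i assume "i < dim_vec (H' *\<^sub>v ?w')"
      then have i: "i < p" using H'c by simp
      have "(H' *\<^sub>v ?w') $ i = (\<Sum>j<Suc p'. x ! (i + j) * ?w' $ j)"
        using i w unfolding H'_def hankel_def by (simp add: scalar_prod_def lessThan_atLeast0)
      also have "\<dots> = (\<Sum>j<p'. x ! (Suc i + j) * w $ j)"
        by (simp only: sum.lessThan_Suc_shift) simp
      also have "\<dots> = (H *\<^sub>v w) $ Suc i"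
        using i w unfolding H_def hankel_def by (simp add: scalar_prod_def lessThan_atLeast0)
      finally show "vec p (\<lambda>i. (H *\<^sub>v w) $ Suc i) $ i = (H' *\<^sub>v ?w') $ i" using i by simp
    qed (use H'c in simp)
  qed
  have le: "vec_space.rank (Suc p) H \<le> p"
    using assms(3) Hc unfolding mrank_def H_def by simp
  have "vec_space.rank (Suc p) H \<le> vec_space.rank p H'"
    by (rule core[OF Hc H'c pi sig le])
  then show ?thesis using Hc H'c unfolding mrank_def H_def H'_def by simp
qed

end
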